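(* Let $k\ge 1$ and let $(N,E)$ be a $(k+1)$-set-homogeneous $k$-hypergraph. If $U,V\subseteq N$ satisfy $|U|=|V|=k+1$ and $U$ and $V$ contain the same number of edges of $(N,E)$, then there is $g\in\mathrm{Aut}(N,E)$ with $U^g=V$.
   Context: A $k$-hypergraph is a pair $(N,E)$ with $N$ countable and $E$ a set of $k$-element subsets of $N$ (edges). A structure is $t$-set-homogeneous if whenever $U,V\subseteq N$ with $|U|=|V|=t$ carry isomorphic induced substructures, there is an automorphism $g$ with $U^g=V$. *)

theory Defs
  imports Main "HOL-Library.Countable_Set"
begin

definition hypergraph :: "nat \<Rightarrow> 'a set \<Rightarrow> 'a set set \<Rightarrow> bool" where
  "hypergraph k N E \<longleftrightarrow> countable N \<and> (\<forall>e\<in>E. e \<subseteq> N \<and> finite e \<and> card e = k)"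

definition automorphism :: "'a set \<Rightarrow> 'a set set \<Rightarrow> ('a \<Rightarrow> 'a) \<Rightarrow> bool" where
  "automorphism N E g \<longleftrightarrow> bij_betw g N N \<and> (\<forall>e. e \<subseteq> N \<longrightarrow> (e \<in> E \<longleftrightarrow> g ` e \<in> E))"

definition induced_iso :: "'a set set \<Rightarrow> 'a set \<Rightarrow> 'a set \<Rightarrow> bool" where
  "induced_iso E U V \<longleftrightarrow>
     (\<exists>f. bij_betw f U V \<and> (\<forall>e. e \<subseteq> U \<longrightarrow> (e \<in> E \<longleftrightarrow> f ` e \<in> E)))"

definition set_homogeneous :: "nat \<Rightarrow> 'a set \<Rightarrow> 'a set set \<Rightarrow> bool" where
  "set_homogeneous t N E \<longleftrightarrow>
     (\<forall>U V. U \<subseteq> N \<longrightarrow> V \<subseteq> N \<longrightarrow> finite U \<longrightarrow> finite V \<longrightarrow> card U = t \<longrightarrow> card V = t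
        \<longrightarrow> induced_iso E U V \<longrightarrow> (\<exists>g. automorphism N E g \<and> g ` U = V))"

definition edges_in :: "'a set set \<Rightarrow> 'a set \<Rightarrow> nat" where
  "edges_in E U = card {e \<in> E. e \<subseteq> U}"

end

theory Submission
  imports Defs
begin

lemma edges_img:
  assumes hg: "hypergraph k N E" and fU: "finite U" and cU: "card U = k + 1"
  shows "{e \<in> E. e \<subseteq> U} = (\<lambda>x. U - {x}) ` {x\<in>U. U - {x} \<in> E}"
proof
  show "{e \<in> E. e \<subseteq> U} \<subseteq> (\<lambda>x. U - {x}) ` {x\<in>U. U - {x} \<in> E}"
  proof
    fix e assume e: "e \<in> {e \<in> E. e \<subseteq> U}"
    hence ce: "card e = k" "finite e" using hg unfolding hypergraph_def by auto
    have "card (U - e) = 1" using e ce fU cU by (simp add: card_Diff_subset)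
    then obtain x where x: "U - e = {x}" by (meson card_1_singletonE)
    hence "e = U - {x}" "x \<in> U" using e by auto
    thus "e \<in> (\<lambda>x. U - {x}) ` {x\<in>U. U - {x} \<in> E}" using e by auto
  qed
qed auto

lemma card_S:
  assumes hg: "hypergraph k N E" and fU: "finite U" and cU: "card U = k + 1"
  shows "edges_in E U = card {x\<in>U. U - {x} \<in> E}"
proof -
  have "inj_on (\<lambda>x. U - {x}) {x\<in>U. U - {x} \<in> E}" by (auto simp: inj_on_def)
  thus ?thesis unfolding edges_in_def edges_img[OF assms] by (simp add: card_image)
qed

theorem lemma3p3:
  fixes k :: nat and N :: "'a set" and E :: "'a set set" and U V :: "'a set"
  assumes "k \<ge> 1"
    and "hypergraph k N E"
    and "set_homogeneous (k + 1) N E"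
    and "U \<subseteq> N" and "V \<subseteq> N" and "finite U" and "finite V"
    and "card U = k + 1" and "card V = k + 1"
    and "edges_in E U = edges_in E V"
  shows "\<exists>g. automorphism N E g \<and> g ` U = V"
proof -
  note hg = assms(2)
  define SU where "SU = {x\<in>U. U - {x} \<in> E}"
  define SV where "SV = {x\<in>V. V - {x} \<in> E}"
  have cS: "card SU = card SV" using card_S[OF hg assms(6,8)] card_S[OF hg assms(7,9)] assms(10)
    unfolding SU_def SV_def by simp
  have fin: "finite SU" "finite SV" "finite (U - SU)" "finite (V - SV)"
    using assms(6,7) unfolding SU_def SV_def by auto
  have sub: "SU \<subseteq> U" "SV \<subseteq> V" unfolding SU_def SV_def by auto
  have cD: "card (U - SU) = card (V - SV)"
    using cS sub fin assms(6-9) by (simp add: card_Diff_subset)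
  obtain f1 where f1: "bij_betw f1 SU SV" using finite_same_card_bij fin cS by blast
  obtain f2 where f2: "bij_betw f2 (U - SU) (V - SV)" using finite_same_card_bij fin cD by blast
  define f where "f x = (if x \<in> SU then f1 x else f2 x)" for x
  have b1: "bij_betw f SU SV" using f1 by (rule bij_betw_cong[THEN iffD1, rotated]) (auto simp: f_def)
  have b2: "bij_betw f (U - SU) (V - SV)" using f2
    by (rule bij_betw_cong[THEN iffD1, rotated]) (auto simp: f_def)
  have "bij_betw f (SU \<union> (U - SU)) (SV \<union> (V - SV))"
    by (rule bij_betw_combine[OF b1 b2]) auto
  hence bf: "bij_betw f U V" using sub by (simp add: Un_absorb1)
  have fS: "\<And>x. x \<in> U \<Longrightarrow> (f x \<in> SV \<longleftrightarrow> x \<in> SU)"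
  proof -
    fix x assume x: "x \<in> U"
    show "(f x \<in> SV \<longleftrightarrow> x \<in> SU)"
    proof (cases "x \<in> SU")
      case True thus ?thesis using b1 bij_betwE by blast
    next
      case False thus ?thesis using b2 x bij_betwE by blast
    qed
  qed
  have iso: "induced_iso E U V"
    unfolding induced_iso_def
  proof (intro exI conjI allI impI)
    show "bij_betw f U V" by fact
    fix e assume eU: "e \<subseteq> U"
    have inj: "inj_on f U" using bf bij_betw_def by blast
    have fe: "finite e" using eU assms(6) finite_subset by blast
    have cfe: "card (f ` e) = card e" using card_image inj_on_subset[OF inj eU] by blast
    show "e \<in> E \<longleftrightarrow> f ` e \<in> E"
    proof (cases "card e = k")
      case False
      thus ?thesis using cfe hg unfolding hypergraph_def by auto
    next
      case True
      have "card (U - e) = 1" using True eU fe assms(6,8) by (simp add: card_Diff_subset)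
      then obtain x where x: "U - e = {x}" by (meson card_1_singletonE)
      hence ee: "e = U - {x}" and xU: "x \<in> U" using eU by auto
      have "f ` e = f ` U - {f x}" using ee inj xU by (simp add: inj_on_image_set_diff)
      hence fe2: "f ` e = V - {f x}" using bf bij_betw_def by metis
      have fxV: "f x \<in> V" using bf xU bij_betwE by blast
      have "e \<in> E \<longleftrightarrow> x \<in> SU" using ee xU unfolding SU_def by auto
      also have "\<dots> \<longleftrightarrow> f x \<in> SV" using fS xU by simp
      also have "\<dots> \<longleftrightarrow> f ` e \<in> E" using fe2 fxV unfolding SV_def by auto
      finally show ?thesis .
    qed
  qed
  show ?thesis using assms(3) iso assms(4-9) unfolding set_homogeneous_def by blast
qed

end
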